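(* Let $A$ (the source) and $B$ (the target) be finite metric graphs, and let $L(A)$ and $L(B)$ denote their perimeters (the sums of all edge lengths). Let $\alpha>0$ and let $m:\alpha A\to B$ be an isometric covering, where $\alpha A$ denotes $A$ with every edge length multiplied by $\alpha$. Let $\mathcal{D}_m$ be the set of edges of $B$ that are doubly covered by $m$, meaning that every point of the edge has at least two preimages under $m$. Then $$\alpha \;\ge\; \frac{L(B)+\sum_{e\in\mathcal{D}_m}\ell(e)}{L(A)},$$ where $\ell(e)$ is the length of $e$. In particular, the optimal scale factor $\mathrm{OPT}$ satisfies this inequality, with $\mathcal{D}_m$ taken for an isometric covering achieving $\mathrm{OPT}$.
   Context: A metric graph is a graph with a positive length assigned to each edge. It is viewed as a metric space: each edge is a segment of its length, glued at the vertices. An isometric covering of a metric space $Y$ by a metric space $X$ is a surjective map $m:X\to Y$ such that, for every path $p$ in $X$, the arc length of $p$ in $X$ equals the arc length of the curve $m(p)$ in $B$, counted with multiplicity. The optimal scale factor $\mathrm{OPT}$ for source $A$ and target $B$ is the minimum $\alpha$ such that $\alpha A$ has an isometric covering onto $B$. *)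

theory Defs
  imports "HOL-Analysis.Analysis" "HOL-Library.Extended_Nonnegative_Real"
begin

text \<open>A finite metric graph: vertex set, edge set, endpoint map (loops and multi-edges
allowed) and positive edge lengths.\<close>

record ('v, 'e) mgraph =
  verts :: "'v set"
  edges :: "'e set"
  ends  :: "'e \<Rightarrow> 'v \<times> 'v"
  len   :: "'e \<Rightarrow> real"

definition finite_mgraph :: "('v, 'e) mgraph \<Rightarrow> bool" where
  "finite_mgraph G \<longleftrightarrow> finite (verts G) \<and> finite (edges G) \<and>
     (\<forall>e\<in>edges G. fst (ends G e) \<in> verts G \<and> snd (ends G e) \<in> verts G \<and> len G e > 0)"

definition scale :: "real \<Rightarrow> ('v, 'e) mgraph \<Rightarrow> ('v, 'e) mgraph" where
  "scale \<alpha> G = G\<lparr>len := (\<lambda>e. \<alpha> * len G e)\<rparr>"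

definition perimeter :: "('v, 'e) mgraph \<Rightarrow> real" where
  "perimeter G = (\<Sum>e\<in>edges G. len G e)"

text \<open>Points of the metric graph: vertices, and interior points (e,t) with 0<t<len e,
t measured from the first endpoint of e.\<close>
type_synonym ('v, 'e) gpoint = "'v + ('e \<times> real)"

definition gpoints :: "('v, 'e) mgraph \<Rightarrow> ('v, 'e) gpoint set" where
  "gpoints G = Inl ` verts G \<union> {Inr (e, t) | e t. e \<in> edges G \<and> 0 < t \<and> t < len G e}"

definition edge_points :: "('v, 'e) mgraph \<Rightarrow> 'e \<Rightarrow> ('v, 'e) gpoint set" where
  "edge_points G e = {Inl (fst (ends G e)), Inl (snd (ends G e))} \<union>
      {Inr (e, t) | t. 0 < t \<and> t < len G e}"

inductive gwalk :: "('v, 'e) mgraph \<Rightarrow> 'v \<Rightarrow> 'v \<Rightarrow> real \<Rightarrow> bool" for G where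
  nil: "u \<in> verts G \<Longrightarrow> gwalk G u u 0"
| step: "gwalk G u w r \<Longrightarrow> e \<in> edges G \<Longrightarrow>
          ends G e = (w, x) \<or> ends G e = (x, w) \<Longrightarrow> gwalk G u x (r + len G e)"

text \<open>Shortest-path distance between vertices (infinite if not connected).\<close>
definition vdist :: "('v, 'e) mgraph \<Rightarrow> 'v \<Rightarrow> 'v \<Rightarrow> ennreal" where
  "vdist G u w = Inf {ennreal r | r. gwalk G u w r}"

definition anchors :: "('v, 'e) mgraph \<Rightarrow> ('v, 'e) gpoint \<Rightarrow> ('v \<times> real) set" where
  "anchors G x = (case x of Inl v \<Rightarrow> {(v, 0)}
     | Inr (e, t) \<Rightarrow> {(fst (ends G e), t), (snd (ends G e), len G e - t)})"

text \<open>Path metric of the metric graph (extended-valued, infinite between components).\<close>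
definition gdist :: "('v, 'e) mgraph \<Rightarrow> ('v, 'e) gpoint \<Rightarrow> ('v, 'e) gpoint \<Rightarrow> ennreal" where
  "gdist G x y = min
     (case (x, y) of (Inr (e, t), Inr (e', s)) \<Rightarrow> if e = e' then ennreal \<bar>t - s\<bar> else \<infinity>
        | _ \<Rightarrow> \<infinity>)
     (Inf {ennreal a + vdist G u w + ennreal b | u a w b.
             (u, a) \<in> anchors G x \<and> (w, b) \<in> anchors G y})"

definition gpath :: "('v, 'e) mgraph \<Rightarrow> (real \<Rightarrow> ('v, 'e) gpoint) \<Rightarrow> bool" where
  "gpath G p \<longleftrightarrow> p ` {0..1} \<subseteq> gpoints G \<and>
     (\<forall>t\<in>{0..1}. \<forall>\<epsilon>>0. \<exists>\<delta>>0. \<forall>s\<in>{0..1}. \<bar>s - t\<bar> < \<delta> \<longrightarrow> gdist G (p s) (p t) < ennreal \<epsilon>)"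

text \<open>Arc length of a curve on [0,1] (supremum over partitions); counts multiplicity.\<close>
definition arclen :: "('v, 'e) mgraph \<Rightarrow> (real \<Rightarrow> ('v, 'e) gpoint) \<Rightarrow> ennreal" where
  "arclen G p = Sup {(\<Sum>i<n. gdist G (p (f i)) (p (f (Suc i)))) | n f.
      f 0 = 0 \<and> f n = 1 \<and> (\<forall>i<n. f i \<le> f (Suc i))}"

definition isometric_covering ::
  "('v, 'e) mgraph \<Rightarrow> ('w, 'f) mgraph \<Rightarrow> (('v, 'e) gpoint \<Rightarrow> ('w, 'f) gpoint) \<Rightarrow> bool" where
  "isometric_covering X Y m \<longleftrightarrow> m ` gpoints X = gpoints Y \<and>
     (\<forall>p. gpath X p \<longrightarrow> arclen X p = arclen Y (m \<circ> p))"

definition doubly_covered ::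
  "('v, 'e) mgraph \<Rightarrow> ('w, 'f) mgraph \<Rightarrow> (('v, 'e) gpoint \<Rightarrow> ('w, 'f) gpoint) \<Rightarrow> 'f set" where
  "doubly_covered X Y m = {e \<in> edges Y. \<forall>y\<in>edge_points Y e.
      \<exists>x1\<in>gpoints X. \<exists>x2\<in>gpoints X. x1 \<noteq> x2 \<and> m x1 = y \<and> m x2 = y}"

end

theory Submission
  imports Defs
begin

definition Pe :: "('v,'e) mgraph \<Rightarrow> 'e \<Rightarrow> real \<Rightarrow> ('v,'e) gpoint" where
  "Pe G e s = (if s \<le> 0 then Inl (fst (ends G e)) else if 1 \<le> s then Inl (snd (ends G e))
     else Inr (e, len G e * s))"

lemma vdist_le_walk: "gwalk G u w r \<Longrightarrow> vdist G u w \<le> ennreal r"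
  unfolding vdist_def by (auto intro!: Inf_lower)

lemma vdist_refl: "u \<in> verts G \<Longrightarrow> vdist G u u = 0"
  using vdist_le_walk[OF gwalk.nil[of u G]] by simp

lemma gdist_le_anchor:
  "(u,a) \<in> anchors G x \<Longrightarrow> (w,b) \<in> anchors G y \<Longrightarrow> gdist G x y \<le> ennreal a + vdist G u w + ennreal b"
  unfolding gdist_def by (rule min.coboundedI2, rule Inf_lower) blast

lemma gdist_same: "gdist G (Inr (e,t)) (Inr (e,s)) \<le> ennreal \<bar>t - s\<bar>"
  unfolding gdist_def by (simp add: min.coboundedI1)

lemma gpoints_Inr: "Inr (f,t) \<in> gpoints G \<longleftrightarrow> f \<in> edges G \<and> 0 < t \<and> t < len G f"
  by (auto simp: gpoints_def)

lemma gpoints_Inl: "Inl v \<in> gpoints G \<longleftrightarrow> v \<in> verts G"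
  by (auto simp: gpoints_def)


lemma conv01: "a \<in> {0..1} \<Longrightarrow> b \<in> {0..1} \<Longrightarrow> s \<in> {0..1} \<Longrightarrow> a + (b - a) * s \<in> {0..1::real}"
proof -
  assume a: "a \<in> {0..1}" and b: "b \<in> {0..1}" and s: "s \<in> {0..1}"
  have e: "a + (b - a) * s = (1 - s) * a + s * b" by (simp add: algebra_simps)
  have "(1 - s) * a \<ge> 0" "s * b \<ge> 0" using a b s by auto
  moreover have "(1 - s) * a \<le> 1 - s" "s * b \<le> s" using a b s by (auto simp: mult_left_le)
  ultimately show ?thesis unfolding e by auto
qed

lemma chain_bounds:
  fixes f :: "nat \<Rightarrow> real"
  assumes "\<forall>i<n. f i \<le> f (Suc i)" "i \<le> n"
  shows "f 0 \<le> f i \<and> f i \<le> f n"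
proof -
  have "\<forall>j. i \<le> j \<longrightarrow> j \<le> n \<longrightarrow> f i \<le> f j" for i
  proof
    fix j show "i \<le> j \<longrightarrow> j \<le> n \<longrightarrow> f i \<le> f j"
      using assms(1) by (induction j) (auto simp: le_Suc_eq intro: order_trans)
  qed
  then show ?thesis using assms(2) by auto
qed

locale edgeok =
  fixes G :: "('v,'e) mgraph" and e :: 'e
  assumes e_in: "e \<in> edges G" and fst_in: "fst (ends G e) \<in> verts G"
    and snd_in: "snd (ends G e) \<in> verts G" and lpos: "len G e > 0"
begin

lemma Pe_in: "Pe G e s \<in> gpoints G"
  using e_in fst_in snd_in lpos
  by (auto simp: Pe_def gpoints_Inr gpoints_Inl)

lemma walk_fs: "vdist G (fst (ends G e)) (snd (ends G e)) \<le> ennreal (len G e)"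
proof -
  have "gwalk G (fst (ends G e)) (snd (ends G e)) (0 + len G e)"
    by (rule gwalk.step[OF gwalk.nil[OF fst_in] e_in]) simp
  then show ?thesis using vdist_le_walk by fastforce
qed

lemma walk_sf: "vdist G (snd (ends G e)) (fst (ends G e)) \<le> ennreal (len G e)"
proof -
  have "gwalk G (snd (ends G e)) (fst (ends G e)) (0 + len G e)"
    by (rule gwalk.step[OF gwalk.nil[OF snd_in] e_in]) simp
  then show ?thesis using vdist_le_walk by fastforce
qed

lemma Pe_dist:
  assumes u: "u \<in> {0..1}" and v: "v \<in> {0..1}"
  shows "gdist G (Pe G e u) (Pe G e v) \<le> ennreal (len G e * \<bar>u - v\<bar>)"
proof -
  let ?a = "fst (ends G e)" and ?b = "snd (ends G e)" and ?l = "len G e"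
  have cu: "u = 0 \<or> u = 1 \<or> (0 < u \<and> u < 1)" using u by auto
  have cv: "v = 0 \<or> v = 1 \<or> (0 < v \<and> v < 1)" using v by auto
  have A: "\<And>t. anchors G (Inr (e,t)) = {(?a, t), (?b, ?l - t)}" by (simp add: anchors_def)
  have B: "\<And>w. anchors G (Inl w) = {(w, 0)}" by (simp add: anchors_def)
  have ra: "vdist G ?a ?a = 0" by (rule vdist_refl[OF fst_in])
  have rb: "vdist G ?b ?b = 0" by (rule vdist_refl[OF snd_in])
  from cu show ?thesis
  proof (elim disjE conjE)
    assume u0: "u = 0"
    from cv show ?thesis
    proof (elim disjE conjE)
      assume "v = 0" then show ?thesis using u0 gdist_le_anchor[of ?a 0 G "Inl ?a" ?a 0 "Inl ?a"] B ra
        by (simp add: Pe_def)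
    next
      assume "v = 1" then show ?thesis using u0 gdist_le_anchor[of ?a 0 G "Inl ?a" ?b 0 "Inl ?b"] B walk_fs
        by (simp add: Pe_def)
    next
      assume "0 < v" "v < 1" then show ?thesis using u0 gdist_le_anchor[of ?a 0 G "Inl ?a" ?a "?l * v" "Inr (e, ?l * v)"] A B ra lpos
        by (simp add: Pe_def)
    qed
  next
    assume u1: "u = 1"
    from cv show ?thesis
    proof (elim disjE conjE)
      assume "v = 0" then show ?thesis using u1 gdist_le_anchor[of ?b 0 G "Inl ?b" ?a 0 "Inl ?a"] B walk_sf
        by (simp add: Pe_def)
    next
      assume "v = 1" then show ?thesis using u1 gdist_le_anchor[of ?b 0 G "Inl ?b" ?b 0 "Inl ?b"] B rb
        by (simp add: Pe_def)
    next
      assume "0 < v" "v < 1" then show ?thesis using u1 gdist_le_anchor[of ?b 0 G "Inl ?b" ?b "?l - ?l * v" "Inr (e, ?l * v)"] A B rb lpos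
        by (simp add: Pe_def algebra_simps)
    qed
  next
    assume u0: "0 < u" "u < 1"
    from cv show ?thesis
    proof (elim disjE conjE)
      assume "v = 0" then show ?thesis using u0 gdist_le_anchor[of ?a "?l * u" G "Inr (e, ?l * u)" ?a 0 "Inl ?a"] A B ra lpos
        by (simp add: Pe_def)
    next
      assume "v = 1" then show ?thesis using u0 gdist_le_anchor[of ?b "?l - ?l * u" G "Inr (e, ?l * u)" ?b 0 "Inl ?b"] A B rb lpos
        by (simp add: Pe_def algebra_simps)
    next
      assume "0 < v" "v < 1" then show ?thesis using u0 gdist_same[of G e "?l * u" "?l * v"] lpos
        by (simp add: Pe_def abs_mult flip: right_diff_distrib)
    qed
  qed
qed

lemma sub_path:
  assumes a: "a \<in> {0..1}" and b: "b \<in> {0..1}"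
  shows "gpath G (\<lambda>s. Pe G e (a + (b - a) * s))"
    and "arclen G (\<lambda>s. Pe G e (a + (b - a) * s)) \<le> ennreal (len G e * \<bar>b - a\<bar>)"
proof -
  let ?p = "\<lambda>s. Pe G e (a + (b - a) * s)"
  let ?L = "len G e * \<bar>b - a\<bar>"
  have L0: "?L \<ge> 0" using lpos by simp
  have dp: "gdist G (?p s) (?p t) \<le> ennreal (?L * \<bar>s - t\<bar>)" if "s \<in> {0..1}" "t \<in> {0..1}" for s t
  proof -
    have "gdist G (?p s) (?p t) \<le> ennreal (len G e * \<bar>(a + (b - a) * s) - (a + (b - a) * t)\<bar>)"
      using Pe_dist conv01[OF a b that(1)] conv01[OF a b that(2)] by blast
    also have "\<bar>(a + (b - a) * s) - (a + (b - a) * t)\<bar> = \<bar>b - a\<bar> * \<bar>s - t\<bar>"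
      by (simp add: abs_mult flip: right_diff_distrib)
    finally show ?thesis by (simp add: mult.assoc)
  qed
  show "gpath G ?p"
    unfolding gpath_def
  proof (intro conjI ballI allI impI)
    show "?p ` {0..1} \<subseteq> gpoints G" using Pe_in by auto
  next
    fix t :: real and \<epsilon> :: real assume t: "t \<in> {0..1}" and e: "\<epsilon> > 0"
    show "\<exists>\<delta>>0. \<forall>s\<in>{0..1}. \<bar>s - t\<bar> < \<delta> \<longrightarrow> gdist G (?p s) (?p t) < ennreal \<epsilon>"
    proof (intro exI[of _ "\<epsilon> / (?L + 1)"] conjI ballI impI)
      show "\<epsilon> / (?L + 1) > 0" using e L0 by simp
      fix s assume s: "s \<in> {0..1}" and st: "\<bar>s - t\<bar> < \<epsilon> / (?L + 1)"
      have "?L * \<bar>s - t\<bar> \<le> (?L + 1) * \<bar>s - t\<bar>" by (simp add: mult_right_mono)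
      also have "\<dots> < \<epsilon>" using st L0 by (simp add: field_simps)
      finally have "ennreal (?L * \<bar>s - t\<bar>) < ennreal \<epsilon>"
        using L0 by (subst ennreal_less_iff) auto
      then show "gdist G (?p s) (?p t) < ennreal \<epsilon>" using dp[OF s t] by (rule le_less_trans[rotated])
    qed
  qed
  show "arclen G ?p \<le> ennreal ?L"
    unfolding arclen_def
  proof (rule Sup_least, clarify)
    fix n and f :: "nat \<Rightarrow> real"
    assume f0: "f 0 = 0" and fn: "f n = 1" and mono: "\<forall>i<n. f i \<le> f (Suc i)"
    have fi: "f i \<in> {0..1}" if "i \<le> n" for i using chain_bounds[OF mono that] f0 fn by auto
    have "(\<Sum>i<n. gdist G (?p (f i)) (?p (f (Suc i)))) \<le> (\<Sum>i<n. ennreal (?L * (f (Suc i) - f i)))"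
    proof (rule sum_mono)
      fix i assume "i \<in> {..<n}"
      then have "i < n" by simp
      then have "gdist G (?p (f i)) (?p (f (Suc i))) \<le> ennreal (?L * \<bar>f i - f (Suc i)\<bar>)"
        using dp fi by simp
      also have "\<bar>f i - f (Suc i)\<bar> = f (Suc i) - f i" using mono \<open>i < n\<close> by auto
      finally show "gdist G (?p (f i)) (?p (f (Suc i))) \<le> ennreal (?L * (f (Suc i) - f i))" .
    qed
    also have "\<dots> = ennreal (\<Sum>i<n. ?L * (f (Suc i) - f i))"
      using mono L0 by (intro sum_ennreal) auto
    also have "(\<Sum>i<n. ?L * (f (Suc i) - f i)) = ?L"
      by (simp add: sum_distrib_left[symmetric] sum_lessThan_telescope f0 fn)
    finally show "(\<Sum>i<n. gdist G (?p (f i)) (?p (f (Suc i)))) \<le> ennreal ?L" .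
  qed
qed

lemma LIP:
  assumes cov: "isometric_covering G Y m" and a: "a \<in> {0..1}" and b: "b \<in> {0..1}"
  shows "gdist Y (m (Pe G e a)) (m (Pe G e b)) \<le> ennreal (len G e * \<bar>b - a\<bar>)"
proof -
  let ?p = "\<lambda>s. Pe G e (a + (b - a) * s)"
  have "gdist Y ((m \<circ> ?p) 0) ((m \<circ> ?p) 1) \<le> arclen Y (m \<circ> ?p)"
    unfolding arclen_def
  proof (rule Sup_upper, rule CollectI, intro exI conjI)
    let ?f = "\<lambda>i::nat. if i = 0 then 0 else (1::real)"
    show "gdist Y ((m \<circ> ?p) 0) ((m \<circ> ?p) 1) = (\<Sum>i<1. gdist Y ((m \<circ> ?p) (?f i)) ((m \<circ> ?p) (?f (Suc i))))"
      by simp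
  qed auto
  also have "\<dots> = arclen G ?p" using cov sub_path(1)[OF a b] unfolding isometric_covering_def by auto
  also have "\<dots> \<le> ennreal (len G e * \<bar>b - a\<bar>)" by (rule sub_path(2)[OF a b])
  finally show ?thesis by simp
qed

end

definition ma :: "('v,'e) mgraph \<Rightarrow> ('v,'e) gpoint \<Rightarrow> real" where
  "ma Y x = (case x of Inl _ \<Rightarrow> 0 | Inr (f,t) \<Rightarrow> min t (len Y f - t))"

lemma anchors_ge: "x \<in> gpoints Y \<Longrightarrow> (u,a) \<in> anchors Y x \<Longrightarrow> ma Y x \<le> a \<and> 0 \<le> ma Y x"
  by (cases x) (auto simp: anchors_def ma_def gpoints_def)

lemma Inf_term_ge:
  assumes "x \<in> gpoints Y" "y \<in> gpoints Y"
  shows "ennreal (ma Y x + ma Y y) \<le> Inf {ennreal a + vdist Y u w + ennreal b | u a w b.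
             (u, a) \<in> anchors Y x \<and> (w, b) \<in> anchors Y y}"
proof (rule Inf_greatest, clarify)
  fix u a w b assume ua: "(u,a) \<in> anchors Y x" and wb: "(w,b) \<in> anchors Y y"
  have 1: "ma Y x \<le> a" "0 \<le> ma Y x" using anchors_ge[OF assms(1) ua] by auto
  have 2: "ma Y y \<le> b" "0 \<le> ma Y y" using anchors_ge[OF assms(2) wb] by auto
  have "ennreal (ma Y x + ma Y y) \<le> ennreal (a + b)" using 1 2 by (intro ennreal_leI) simp
  also have "\<dots> = ennreal a + ennreal b" using 1 2 by (simp add: ennreal_plus)
  also have "\<dots> \<le> ennreal a + vdist Y u w + ennreal b" by (simp add: add_mono)
  finally show "ennreal (ma Y x + ma Y y) \<le> ennreal a + vdist Y u w + ennreal b" .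
qed

lemma BAND:
  fixes Y :: "('v,'e) mgraph"
  assumes x: "Inr (f,t) \<in> gpoints Y" and y: "y \<in> gpoints Y"
    and d: "gdist Y (Inr (f,t)) y < ennreal \<eta>" and eta: "\<eta> \<le> min t (len Y f - t)"
  shows "\<exists>s. y = Inr (f,s) \<and> \<bar>t - s\<bar> < \<eta>"
proof -
  let ?I = "Inf {ennreal a + vdist Y u w + ennreal b | u a w b.
             (u, a) \<in> anchors Y (Inr (f,t)) \<and> (w, b) \<in> anchors Y y}"
  let ?C = "(case (Inr (f,t) :: ('v,'e) gpoint, y) of (Inr (e, t), Inr (e', s)) \<Rightarrow> if e = e' then ennreal \<bar>t - s\<bar> else \<infinity>
        | _ \<Rightarrow> \<infinity>)"
  have "ennreal (ma Y (Inr (f,t)) + ma Y y) \<le> ?I" by (rule Inf_term_ge[OF x y])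
  moreover have "ma Y y \<ge> 0" using y by (cases y) (auto simp: ma_def gpoints_def)
  moreover have "ma Y (Inr (f,t)) = min t (len Y f - t)" by (simp add: ma_def)
  ultimately have "\<eta> \<le> ma Y (Inr (f,t)) + ma Y y" using eta by linarith
  then have "ennreal \<eta> \<le> ennreal (ma Y (Inr (f,t)) + ma Y y)" by (rule ennreal_leI)
  then have etaI: "ennreal \<eta> \<le> ?I" using \<open>ennreal (ma Y (Inr (f,t)) + ma Y y) \<le> ?I\<close> by (rule order_trans)
  have "min ?C ?I < ennreal \<eta>" using d unfolding gdist_def .
  then have "?C < ennreal \<eta> \<or> ?I < ennreal \<eta>" by (simp only: min_less_iff_disj)
  then have C: "?C < ennreal \<eta>" using etaI by (simp add: not_less[symmetric])
  show ?thesis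
  proof (cases y)
    case (Inl v) then show ?thesis using C by simp
  next
    case (Inr p)
    obtain f' s where p: "p = (f', s)" by force
    show ?thesis
    proof (cases "f = f'")
      case True
      then have "ennreal \<bar>t - s\<bar> < ennreal \<eta>" using C Inr p by simp
      then have "\<bar>t - s\<bar> < \<eta>" by (simp add: ennreal_less_iff)
      then show ?thesis using Inr p True by auto
    next
      case False then show ?thesis using C Inr p by simp
    qed
  qed
qed

lemma EXACT:
  assumes x: "Inr (f,s1) \<in> gpoints Y" and y: "Inr (f,s2) \<in> gpoints Y"
    and h: "\<bar>s1 - s2\<bar> \<le> min s1 (len Y f - s1) + min s2 (len Y f - s2)"
  shows "gdist Y (Inr (f,s1)) (Inr (f,s2)) = ennreal \<bar>s1 - s2\<bar>"
proof -
  let ?I = "Inf {ennreal a + vdist Y u w + ennreal b | u a w b.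
             (u, a) \<in> anchors Y (Inr (f,s1)) \<and> (w, b) \<in> anchors Y (Inr (f,s2))}"
  have "ennreal (ma Y (Inr (f,s1)) + ma Y (Inr (f,s2))) \<le> ?I" by (rule Inf_term_ge[OF x y])
  moreover have "ma Y (Inr (f,s1)) + ma Y (Inr (f,s2)) = min s1 (len Y f - s1) + min s2 (len Y f - s2)"
    by (simp add: ma_def)
  ultimately have "ennreal (min s1 (len Y f - s1) + min s2 (len Y f - s2)) \<le> ?I" by simp
  moreover have "ennreal \<bar>s1 - s2\<bar> \<le> ennreal (min s1 (len Y f - s1) + min s2 (len Y f - s2))"
    using h by (rule ennreal_leI)
  ultimately have "ennreal \<bar>s1 - s2\<bar> \<le> ?I" by (rule order_trans[rotated])
  then show ?thesis unfolding gdist_def by (simp add: min_def)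
qed

lemma piece:
  fixes q :: "real \<Rightarrow> ('v,'e) gpoint" and Y :: "('v,'e) mgraph" and f :: 'e
  assumes qY: "\<forall>s\<in>{0..1}. q s \<in> gpoints Y"
    and lip: "\<forall>a\<in>{0..1}. \<forall>b\<in>{0..1}. gdist Y (q a) (q b) \<le> ennreal (c * \<bar>b - a\<bar>)"
    and c: "c > 0" and ab: "0 \<le> a" "a \<le> b" "b \<le> 1" and small: "c * (b - a) < \<eta>" and eta: "\<eta> > 0"
  defines "U \<equiv> {t \<in> {2*\<eta>..len Y f - 2*\<eta>}. \<exists>s\<in>{a..b}. q s = Inr (f,t)}"
  shows "U \<in> sets lborel \<and> emeasure lborel U \<le> ennreal (c * (b - a)) \<and> (U \<noteq> {} \<longrightarrow> (\<exists>t. q a = Inr (f,t)))"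
proof (cases "U = {}")
  case True then show ?thesis by simp
next
  case False
  then obtain t0 s0 where t0: "t0 \<in> {2*\<eta>..len Y f - 2*\<eta>}" and s0: "s0 \<in> {a..b}" and qs0: "q s0 = Inr (f,t0)"
    unfolding U_def by blast
  have sub: "{a..b} \<subseteq> {0..1}" using ab by auto
  define g where "g s = (case q s of Inr p \<Rightarrow> snd p | Inl v \<Rightarrow> 0)" for s
  have H: "q s = Inr (f, g s) \<and> \<bar>t0 - g s\<bar> < \<eta>" if s: "s \<in> {a..b}" for s
  proof -
    have g1: "gdist Y (q s0) (q s) \<le> ennreal (c * \<bar>s - s0\<bar>)" using lip sub s s0 by blast
    have le: "c * \<bar>s - s0\<bar> \<le> c * (b - a)" using s s0 c by (intro mult_left_mono) auto
    have "c * \<bar>s - s0\<bar> < \<eta>" using le small by linarith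
    then have "ennreal (c * \<bar>s - s0\<bar>) < ennreal \<eta>" using c by (subst ennreal_less_iff) auto
    with g1 have "gdist Y (q s0) (q s) < ennreal \<eta>" by (rule le_less_trans)
    then have "gdist Y (Inr (f,t0)) (q s) < ennreal \<eta>" using qs0 by simp
    moreover have "Inr (f,t0) \<in> gpoints Y" using qY sub s0 unfolding qs0[symmetric] by blast
    moreover have "q s \<in> gpoints Y" using qY sub s by blast
    moreover have "\<eta> \<le> min t0 (len Y f - t0)" using t0 eta by auto
    ultimately obtain s' where "q s = Inr (f,s')" "\<bar>t0 - s'\<bar> < \<eta>" using BAND by metis
    then show ?thesis by (simp add: g_def)
  qed
  have Lg: "\<bar>g s - g s'\<bar> \<le> c * \<bar>s - s'\<bar>" if s: "s \<in> {a..b}" and s': "s' \<in> {a..b}" for s s'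
  proof -
    have "q s \<in> gpoints Y" "q s' \<in> gpoints Y" using qY sub s s' by blast+
    then have "Inr (f, g s) \<in> gpoints Y" "Inr (f, g s') \<in> gpoints Y" using H[OF s] H[OF s'] by simp_all
    moreover have "\<bar>g s - g s'\<bar> \<le> min (g s) (len Y f - g s) + min (g s') (len Y f - g s')"
      using H[OF s] H[OF s'] t0 by auto
    ultimately have "gdist Y (q s) (q s') = ennreal \<bar>g s - g s'\<bar>" using H s s' EXACT by metis
    moreover have "gdist Y (q s) (q s') \<le> ennreal (c * \<bar>s' - s\<bar>)" using lip sub s s' by blast
    ultimately show ?thesis using c by (simp add: abs_minus_commute)
  qed
  have cont: "continuous_on {a..b} g"
  proof (rule lipschitz_on_continuous_on)
    show "c-lipschitz_on {a..b} g" unfolding lipschitz_on_def using Lg c by (auto simp: dist_real_def)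
  qed
  have Ueq: "U = {2*\<eta>..len Y f - 2*\<eta>} \<inter> g ` {a..b}"
  proof
    show "U \<subseteq> {2*\<eta>..len Y f - 2*\<eta>} \<inter> g ` {a..b}"
      unfolding U_def using H by (auto simp: image_iff)
    show "{2*\<eta>..len Y f - 2*\<eta>} \<inter> g ` {a..b} \<subseteq> U"
      unfolding U_def using H by auto
  qed
  obtain c1 d1 where cd: "g ` {a..b} = {c1..d1}" "c1 \<le> d1"
    using continuous_image_closed_interval[OF ab(2) cont] by blast
  have "c1 \<in> g ` {a..b}" "d1 \<in> g ` {a..b}" using cd by auto
  then obtain s1 s2 where s12: "s1 \<in> {a..b}" "s2 \<in> {a..b}" "c1 = g s1" "d1 = g s2" by blast
  have "d1 - c1 \<le> c * \<bar>s2 - s1\<bar>" using Lg[OF s12(2) s12(1)] s12 by simp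
  also have "\<dots> \<le> c * (b - a)" using s12 c by (intro mult_left_mono) auto
  finally have dc: "d1 - c1 \<le> c * (b - a)" .
  have meas: "U \<in> sets lborel"
  proof -
    have "compact (g ` {a..b})" by (rule compact_continuous_image[OF cont compact_Icc])
    then have "closed U" unfolding Ueq by (intro closed_Int closed_atLeastAtMost compact_imp_closed)
    then show ?thesis by simp
  qed
  have "emeasure lborel U \<le> emeasure lborel {c1..d1}"
    using cd by (intro emeasure_mono) (auto simp: Ueq)
  also have "\<dots> = ennreal (d1 - c1)" using cd by simp
  also have "\<dots> \<le> ennreal (c * (b - a))" using dc by (intro ennreal_leI)
  finally show ?thesis using meas H[of a] ab by auto
qed

lemma piece_index:
  assumes "0 < s" "s < 1" "(M::nat) \<ge> 1"
  shows "\<exists>k<M. s \<in> {real k / real M .. real (Suc k) / real M}"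
proof -
  define k where "k = nat \<lfloor>s * M\<rfloor>"
  have M0: "real M > 0" using assms by simp
  have f0: "\<lfloor>s * M\<rfloor> \<ge> 0" using assms by simp
  have rk: "real k = of_int \<lfloor>s * M\<rfloor>" using f0 by (simp add: k_def)
  have "real k \<le> s * M" using rk by simp
  then have 1: "real k / M \<le> s" using M0 by (simp add: divide_le_eq)
  have "s * M < real k + 1" using rk by linarith
  then have 2: "s \<le> real (Suc k) / M" using M0 by (simp add: le_divide_eq)
  have "real k \<le> s * M" by fact
  also have "\<dots> < M" using assms M0 by simp
  finally have "k < M" by simp
  then show ?thesis using 1 2 by auto
qed

lemma KEY:
  fixes Y :: "('v,'f) mgraph" and q :: "'e \<Rightarrow> real \<Rightarrow> ('v,'f) gpoint" and E :: "'e set"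
    and c :: "'e \<Rightarrow> real" and D :: "'f set" and Fin :: "'f \<Rightarrow> real set"
  assumes finE: "finite E" and finY: "finite (edges Y)"
    and cpos: "\<forall>e\<in>E. c e > 0"
    and qY: "\<forall>e\<in>E. \<forall>s\<in>{0..1}. q e s \<in> gpoints Y"
    and lip: "\<forall>e\<in>E. \<forall>a\<in>{0..1}. \<forall>b\<in>{0..1}. gdist Y (q e a) (q e b) \<le> ennreal (c e * \<bar>b - a\<bar>)"
    and finF: "\<forall>f\<in>edges Y. finite (Fin f)"
    and cov1: "\<forall>f\<in>edges Y. \<forall>t. 0 < t \<and> t < len Y f \<and> t \<notin> Fin f \<longrightarrow>
                 (\<exists>e\<in>E. \<exists>s. 0 < s \<and> s < 1 \<and> q e s = Inr (f,t))"
    and cov2: "\<forall>f\<in>D. \<forall>t. 0 < t \<and> t < len Y f \<and> t \<notin> Fin f \<longrightarrow>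
                 (\<exists>e1 s1 e2 s2. e1 \<in> E \<and> e2 \<in> E \<and> 0 < s1 \<and> s1 < 1 \<and> 0 < s2 \<and> s2 < 1 \<and>
                    (e1,s1) \<noteq> (e2,s2) \<and> q e1 s1 = Inr (f,t) \<and> q e2 s2 = Inr (f,t))"
    and eta: "\<eta> > 0"
  shows "(\<Sum>f\<in>edges Y. (if f \<in> D then 2 else 1) * (len Y f - 5*\<eta>)) \<le> (\<Sum>e\<in>E. c e)"
proof -
  define cf where "cf f = (if f \<in> D then 2 else 1::real)" for f
  define K where "K = nat \<lceil>(\<Sum>e\<in>E. c e) / \<eta>\<rceil> + 1"
  have K1: "K \<ge> 1" by (simp add: K_def)
  have Kc: "c e / real K < \<eta>" if "e \<in> E" for e
  proof -
    have "c e \<le> (\<Sum>e\<in>E. c e)" using cpos that finE by (intro member_le_sum) auto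
    also have "(\<Sum>e\<in>E. c e) / \<eta> < real K" unfolding K_def by linarith
    then have "(\<Sum>e\<in>E. c e) < real K * \<eta>" using eta by (simp add: divide_less_eq)
    finally show ?thesis using K1 by (simp add: divide_less_eq mult.commute)
  qed
  define N where "N n = n + K" for n :: nat
  have N1: "N n \<ge> 1" for n using K1 by (simp add: N_def)
  have cN: "c e / real (N n) < \<eta>" if "e \<in> E" for e n
  proof -
    have "c e / real (N n) \<le> c e / real K"
      using cpos that K1 by (intro divide_left_mono) (auto simp: N_def)
    then show ?thesis using Kc[OF that] by linarith
  qed
  define J where "J n k = {real k / real (N n) .. real (Suc k) / real (N n)}" for n k :: nat
  define Mf where "Mf f = {2*\<eta> .. len Y f - 2*\<eta>}" for f
  define U where "U n e k f = {t \<in> Mf f. \<exists>s\<in>J n k. q e s = Inr (f,t)}" for n e k f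
  define P where "P n = E \<times> {..<N n}" for n
  define cnt where "cnt n f t = (\<Sum>p\<in>P n. indicator (U n (fst p) (snd p) f) t :: ennreal)" for n f t
  define W where "W n f = {t \<in> Mf f. ennreal (cf f) \<le> cnt n f t}" for n f
  define V where "V n f = (\<Inter>m\<in>{n..}. W m f)" for n f
  have finP: "finite (P n)" for n using finE by (simp add: P_def)

  have Uprops: "U n e k f \<in> sets lborel \<and> emeasure lborel (U n e k f) \<le> ennreal (c e / N n) \<and>
      (U n e k f \<noteq> {} \<longrightarrow> (\<exists>t. q e (real k / N n) = Inr (f,t)))" if e: "e \<in> E" and k: "k < N n" for n e k f
  proof -
    have Npos: "real (N n) > 0" using N1[of n] by simp
    have bma: "real (Suc k) / real (N n) - real k / real (N n) = 1 / real (N n)"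
      by (simp add: diff_divide_distrib[symmetric])
    have le1: "real (Suc k) / real (N n) \<le> 1" using k Npos by (simp add: divide_le_eq)
    have le2: "real k / real (N n) \<le> real (Suc k) / real (N n)" using Npos by (simp add: divide_right_mono)
    have sm: "c e * (real (Suc k) / real (N n) - real k / real (N n)) < \<eta>"
      unfolding bma using cN[OF e] by simp
    have "U n e k f \<in> sets lborel \<and> emeasure lborel (U n e k f) \<le> ennreal (c e * (real (Suc k) / real (N n) - real k / real (N n)))
       \<and> (U n e k f \<noteq> {} \<longrightarrow> (\<exists>t. q e (real k / N n) = Inr (f,t)))"
      unfolding U_def Mf_def J_def
      by (rule piece[of "q e" Y "c e" "real k / real (N n)" "real (Suc k) / real (N n)" \<eta> f])
         (use qY lip e cpos le1 le2 sm eta in auto)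
    then show ?thesis unfolding bma by simp
  qed
  have Umeas: "U n e k f \<in> sets lborel" if "p \<in> P n" "p = (e,k)" for n e k f p
    using Uprops that by (auto simp: P_def)
  have cnt_meas: "cnt n f \<in> borel_measurable lborel" for n f
    unfolding cnt_def
    by (rule borel_measurable_sum, rule borel_measurable_indicator) (use Umeas in force)
  have Wmeas: "W n f \<in> sets lborel" for n f
  proof -
    have "{t \<in> space lborel. (\<lambda>_. ennreal (cf f)) t \<le> cnt n f t} \<in> sets lborel"
      by (rule borel_measurable_le) (use cnt_meas[of n f] in auto)
    moreover have "Mf f \<in> sets lborel" by (simp add: Mf_def)
    ultimately have "Mf f \<inter> {t \<in> space lborel. (\<lambda>_. ennreal (cf f)) t \<le> cnt n f t} \<in> sets lborel" by blast
    moreover have "W n f = Mf f \<inter> {t \<in> space lborel. (\<lambda>_. ennreal (cf f)) t \<le> cnt n f t}"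
      by (auto simp: W_def)
    ultimately show ?thesis by simp
  qed
  have C3: "ennreal (cf f) * emeasure lborel (W n f) \<le> (\<Sum>p\<in>P n. emeasure lborel (U n (fst p) (snd p) f))" for n f
  proof -
    have "ennreal (cf f) * emeasure lborel (W n f) = (\<integral>\<^sup>+ t. ennreal (cf f) * indicator (W n f) t \<partial>lborel)"
      using Wmeas by (simp add: nn_integral_cmult_indicator)
    also have "\<dots> \<le> (\<integral>\<^sup>+ t. cnt n f t \<partial>lborel)"
      by (rule nn_integral_mono) (auto simp: W_def indicator_def)
    also have "\<dots> = (\<Sum>p\<in>P n. (\<integral>\<^sup>+ t. indicator (U n (fst p) (snd p) f) t \<partial>lborel))"
      unfolding cnt_def
      by (rule nn_integral_sum, rule borel_measurable_indicator) (use Umeas in force)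
    also have "\<dots> = (\<Sum>p\<in>P n. emeasure lborel (U n (fst p) (snd p) f))"
      by (rule sum.cong) (use Umeas in force)+
    finally show ?thesis .
  qed
  have inner: "(\<Sum>f\<in>edges Y. emeasure lborel (U n e k f)) \<le> ennreal (c e / N n)"
    if e: "e \<in> E" and k: "k < N n" for n e k
  proof (cases "\<exists>f0\<in>edges Y. U n e k f0 \<noteq> {}")
    case True
    then obtain f0 where f0: "f0 \<in> edges Y" "U n e k f0 \<noteq> {}" by blast
    have others: "U n e k f = {}" if "f \<noteq> f0" for f
    proof (rule ccontr)
      assume "U n e k f \<noteq> {}"
      then obtain t where "q e (real k / N n) = Inr (f,t)" using Uprops[OF e k] by blast
      moreover obtain t0 where "q e (real k / N n) = Inr (f0,t0)" using Uprops[OF e k] f0 by blast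
      ultimately show False using that by simp
    qed
    have "(\<Sum>f\<in>edges Y. emeasure lborel (U n e k f)) = emeasure lborel (U n e k f0) + (\<Sum>f\<in>edges Y - {f0}. emeasure lborel (U n e k f))"
      using finY f0 by (simp add: sum.remove)
    also have "(\<Sum>f\<in>edges Y - {f0}. emeasure lborel (U n e k f)) = 0"
      using others by simp
    finally show ?thesis using Uprops[OF e k] by simp
  next
    case False
    then show ?thesis by simp
  qed
  have C4: "(\<Sum>f\<in>edges Y. \<Sum>p\<in>P n. emeasure lborel (U n (fst p) (snd p) f)) \<le> ennreal (\<Sum>e\<in>E. c e)" for n
  proof -
    have "(\<Sum>f\<in>edges Y. \<Sum>p\<in>P n. emeasure lborel (U n (fst p) (snd p) f))
        = (\<Sum>p\<in>P n. \<Sum>f\<in>edges Y. emeasure lborel (U n (fst p) (snd p) f))"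
      by (rule sum.swap)
    also have "\<dots> \<le> (\<Sum>p\<in>P n. ennreal (c (fst p) / N n))"
      by (rule sum_mono) (use inner in \<open>auto simp: P_def\<close>)
    also have "\<dots> = ennreal (\<Sum>p\<in>P n. c (fst p) / N n)"
      using cpos by (intro sum_ennreal) (auto simp: P_def)
    also have "(\<Sum>p\<in>P n. c (fst p) / N n) = (\<Sum>e\<in>E. \<Sum>k<N n. c e / N n)"
      unfolding P_def sum.cartesian_product by (rule sum.cong) auto
    also have "\<dots> = (\<Sum>e\<in>E. c e)"
      using N1[of n] by (intro sum.cong) auto
    finally show ?thesis by simp
  qed
  have C5: "\<exists>N0. \<forall>n\<ge>N0. t \<in> W n f" if f: "f \<in> edges Y" and t: "t \<in> Mf f" and tF: "t \<notin> Fin f" for f t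
  proof -
    have t01: "0 < t" "t < len Y f" using t eta by (auto simp: Mf_def)
    have inU: "t \<in> U n e k f" if "q e s = Inr (f,t)" "s \<in> J n k" for n e k s
      using that t by (auto simp: U_def)
    have cnt_ge: "cnt n f t \<ge> (\<Sum>p\<in>S. indicator (U n (fst p) (snd p) f) t)" if "S \<subseteq> P n" for n S
      unfolding cnt_def using that finP by (intro sum_mono2) auto
    show ?thesis
    proof (cases "f \<in> D")
      case False
      obtain e s where es: "e \<in> E" "0 < s" "s < 1" "q e s = Inr (f,t)" using cov1 f t01 tF by blast
      have "t \<in> W n f" for n
      proof -
        obtain k where k: "k < N n" "s \<in> J n k" using piece_index[OF es(2,3) N1[of n]] by (auto simp: J_def)
        have "(1::ennreal) = (\<Sum>p\<in>{(e,k)}. indicator (U n (fst p) (snd p) f) t)"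
          using inU[OF es(4) k(2)] by simp
        also have "\<dots> \<le> cnt n f t" using es k by (intro cnt_ge) (auto simp: P_def)
        finally show ?thesis using t False by (simp add: W_def cf_def)
      qed
      then show ?thesis by blast
    next
      case True
      obtain e1 s1 e2 s2 where es: "e1 \<in> E" "e2 \<in> E" "0 < s1" "s1 < 1" "0 < s2" "s2 < 1"
        "(e1,s1) \<noteq> (e2,s2)" "q e1 s1 = Inr (f,t)" "q e2 s2 = Inr (f,t)"
        using cov2 True t01 tF by blast
      define N0 where "N0 = (if e1 = e2 then nat \<lceil>1 / \<bar>s1 - s2\<bar>\<rceil> else 0)"
      have "t \<in> W n f" if n: "n \<ge> N0" for n
      proof -
        obtain k1 where k1: "k1 < N n" "s1 \<in> J n k1" using piece_index[OF es(3,4) N1[of n]] by (auto simp: J_def)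
        obtain k2 where k2: "k2 < N n" "s2 \<in> J n k2" using piece_index[OF es(5,6) N1[of n]] by (auto simp: J_def)
        have neq: "(e1,k1) \<noteq> (e2,k2)"
        proof
          assume eq: "(e1,k1) = (e2,k2)"
          then have "s1 \<noteq> s2" using es(7) by auto
          have Npos: "real (N n) > 0" using N1[of n] by simp
          have "\<bar>s1 - s2\<bar> \<le> real (Suc k1) / N n - real k1 / N n"
            using k1(2) k2(2) eq by (auto simp: J_def abs_le_iff)
          also have "\<dots> = 1 / N n" by (simp add: diff_divide_distrib[symmetric])
          finally have a: "\<bar>s1 - s2\<bar> \<le> 1 / N n" .
          have "1 / \<bar>s1 - s2\<bar> \<le> real N0" using eq by (simp add: N0_def)
          also have "\<dots> < real (N n)" using n K1 by (simp add: N_def)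
          finally have "1 < real (N n) * \<bar>s1 - s2\<bar>" using \<open>s1 \<noteq> s2\<close> by (simp add: divide_less_eq)
          moreover have "real (N n) * \<bar>s1 - s2\<bar> \<le> 1" using a Npos by (simp add: le_divide_eq mult.commute)
          ultimately show False by simp
        qed
        have "(2::ennreal) = (\<Sum>p\<in>{(e1,k1),(e2,k2)}. indicator (U n (fst p) (snd p) f) t)"
          using inU[OF es(8) k1(2)] inU[OF es(9) k2(2)] neq by simp
        also have "\<dots> \<le> cnt n f t" using es k1 k2 by (intro cnt_ge) (auto simp: P_def)
        finally show ?thesis using t True by (simp add: W_def cf_def)
      qed
      then show ?thesis by blast
    qed
  qed
  have Vmeas: "V n f \<in> sets lborel" for n f
    unfolding V_def by (rule sets.countable_INT') (use Wmeas in auto)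
  have Vinc: "incseq (\<lambda>n. V n f)" for f
    unfolding incseq_def V_def by auto
  have VW: "V n f \<subseteq> W n f" for n f unfolding V_def by auto
  have ev: "eventually (\<lambda>n. ennreal (max 0 (len Y f - 5*\<eta>)) \<le> emeasure lborel (V n f)) sequentially"
    if f: "f \<in> edges Y" for f
  proof (cases "len Y f - 5*\<eta> \<le> 0")
    case True then show ?thesis by simp
  next
    case False
    have lim: "(\<lambda>n. emeasure lborel (V n f)) \<longlonglongrightarrow> emeasure lborel (\<Union>n. V n f)"
      by (rule Lim_emeasure_incseq) (use Vmeas Vinc in auto)
    have cover: "Mf f - Fin f \<subseteq> (\<Union>n. V n f)"
    proof
      fix t assume "t \<in> Mf f - Fin f"
      then obtain N0 where "\<forall>n\<ge>N0. t \<in> W n f" using C5 f by blast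
      then have "t \<in> V N0 f" by (auto simp: V_def)
      then show "t \<in> (\<Union>n. V n f)" by blast
    qed
    have "ennreal (len Y f - 4*\<eta>) = emeasure lborel (Mf f)"
      using False eta by (simp add: Mf_def)
    also have "\<dots> = emeasure lborel (Mf f - Fin f)"
      using finF f by (intro emeasure_Diff_null_set[symmetric] finite_imp_null_set_lborel) (auto simp: Mf_def)
    also have "\<dots> \<le> emeasure lborel (\<Union>n. V n f)"
      using cover Vmeas by (intro emeasure_mono) auto
    finally have big: "ennreal (len Y f - 4*\<eta>) \<le> emeasure lborel (\<Union>n. V n f)" .
    have "ennreal (len Y f - 5*\<eta>) < ennreal (len Y f - 4*\<eta>)"
      using False eta by (subst ennreal_less_iff) auto
    then have "ennreal (len Y f - 5*\<eta>) < emeasure lborel (\<Union>n. V n f)" using big by (rule less_le_trans)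
    then have "eventually (\<lambda>n. ennreal (len Y f - 5*\<eta>) < emeasure lborel (V n f)) sequentially"
      by (rule order_tendstoD(1)[OF lim])
    then show ?thesis by eventually_elim (use False in auto)
  qed
  have "eventually (\<lambda>n. \<forall>f\<in>edges Y. ennreal (max 0 (len Y f - 5*\<eta>)) \<le> emeasure lborel (V n f)) sequentially"
    using ev finY by (intro eventually_ball_finite) auto
  then obtain n where n: "\<forall>f\<in>edges Y. ennreal (max 0 (len Y f - 5*\<eta>)) \<le> emeasure lborel (V n f)"
    by (auto simp: eventually_sequentially)
  have cf0: "cf f \<ge> 0" for f by (simp add: cf_def)
  have "ennreal (\<Sum>f\<in>edges Y. cf f * max 0 (len Y f - 5*\<eta>)) = (\<Sum>f\<in>edges Y. ennreal (cf f) * ennreal (max 0 (len Y f - 5*\<eta>)))"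
    using cf0 by (simp add: ennreal_mult sum_ennreal[symmetric])
  also have "\<dots> \<le> (\<Sum>f\<in>edges Y. ennreal (cf f) * emeasure lborel (W n f))"
  proof (rule sum_mono, rule mult_left_mono)
    fix f assume f: "f \<in> edges Y"
    have "emeasure lborel (V n f) \<le> emeasure lborel (W n f)" using VW Wmeas by (intro emeasure_mono) auto
    then show "ennreal (max 0 (len Y f - 5*\<eta>)) \<le> emeasure lborel (W n f)" using n f by (meson order_trans)
  qed simp
  also have "\<dots> \<le> (\<Sum>f\<in>edges Y. \<Sum>p\<in>P n. emeasure lborel (U n (fst p) (snd p) f))"
    by (rule sum_mono) (rule C3)
  also have "\<dots> \<le> ennreal (\<Sum>e\<in>E. c e)" by (rule C4)
  finally have "(\<Sum>f\<in>edges Y. cf f * max 0 (len Y f - 5*\<eta>)) \<le> (\<Sum>e\<in>E. c e)"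
    using cpos by (subst (asm) ennreal_le_iff) (auto intro: sum_nonneg less_imp_le)
  moreover have "(\<Sum>f\<in>edges Y. cf f * (len Y f - 5*\<eta>)) \<le> (\<Sum>f\<in>edges Y. cf f * max 0 (len Y f - 5*\<eta>))"
    using cf0 by (intro sum_mono mult_left_mono) auto
  ultimately show ?thesis by (simp add: cf_def)
qed

lemma pre_point:
  assumes "x \<in> gpoints G" "x \<notin> Inl ` verts G"
  shows "\<exists>e\<in>edges G. \<exists>s. 0 < s \<and> s < 1 \<and> x = Pe G e s"
proof -
  obtain e t where x: "x = Inr (e,t)" "e \<in> edges G" "0 < t" "t < len G e"
    using assms unfolding gpoints_def by blast
  have lp: "len G e > 0" using x by linarith
  have "x = Pe G e (t / len G e)" using x lp by (simp add: Pe_def divide_le_eq le_divide_eq)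
  moreover have "0 < t / len G e" "t / len G e < 1" using x lp by (auto simp: divide_less_eq)
  ultimately show ?thesis using x by blast
qed

theorem theorem1:
  fixes A :: "('va, 'ea) mgraph" and B :: "('vb, 'eb) mgraph"
    and \<alpha> :: real and m :: "('va, 'ea) gpoint \<Rightarrow> ('vb, 'eb) gpoint"
  assumes "finite_mgraph A" and "finite_mgraph B" and "\<alpha> > 0"
    and "isometric_covering (scale \<alpha> A) B m"
  shows "\<alpha> \<ge> (perimeter B + (\<Sum>e\<in>doubly_covered (scale \<alpha> A) B m. len B e)) / perimeter A"
proof -
  note fA = assms(1) and fB = assms(2) and al = assms(3) and cov = assms(4)
  define X where "X = scale \<alpha> A"
  have Xv: "verts X = verts A" and Xe: "edges X = edges A" and Xends: "ends X = ends A"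
    and Xl: "len X e = \<alpha> * len A e" for e by (simp_all add: X_def scale_def)
  have finA: "finite (edges A)" and Aok: "\<forall>e\<in>edges A. fst (ends A e) \<in> verts A \<and> snd (ends A e) \<in> verts A \<and> len A e > 0"
    using fA by (auto simp: finite_mgraph_def)
  have finB: "finite (edges B)" and Bpos: "\<forall>f\<in>edges B. len B f > 0"
    using fB by (auto simp: finite_mgraph_def)
  have eok: "edgeok X e" if "e \<in> edges A" for e
    using Aok that al by unfold_locales (auto simp: Xv Xe Xends Xl)
  have covX: "isometric_covering X B m" using cov by (simp add: X_def)
  have img: "m ` gpoints X = gpoints B" using covX by (simp add: isometric_covering_def)
  define q where "q e s = m (Pe X e s)" for e s
  define c where "c e = \<alpha> * len A e" for e
  define D where "D = doubly_covered X B m"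
  define Fin where "Fin f = {t. Inr (f,t) \<in> m ` Inl ` verts A}" for f
  have qY: "\<forall>e\<in>edges A. \<forall>s\<in>{0..1}. q e s \<in> gpoints B"
    using edgeok.Pe_in[OF eok] img unfolding q_def by blast
  have lip: "\<forall>e\<in>edges A. \<forall>a\<in>{0..1}. \<forall>b\<in>{0..1}. gdist B (q e a) (q e b) \<le> ennreal (c e * \<bar>b - a\<bar>)"
    using edgeok.LIP[OF eok covX] unfolding q_def c_def Xl by blast
  have cpos: "\<forall>e\<in>edges A. c e > 0" using Aok al by (simp add: c_def)
  have finF: "\<forall>f\<in>edges B. finite (Fin f)"
  proof
    fix f
    have "Fin f = (\<lambda>t. Inr (f,t)) -` (m ` Inl ` verts A)" by (auto simp: Fin_def)
    moreover have "finite (m ` Inl ` verts A)" using fA by (simp add: finite_mgraph_def)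
    ultimately show "finite (Fin f)" by (simp add: finite_vimageI inj_on_def)
  qed
  have pre: "\<exists>e\<in>edges A. \<exists>s. 0 < s \<and> s < 1 \<and> q e s = Inr (f,t) \<and> x = Pe X e s"
    if "x \<in> gpoints X" "m x = Inr (f,t)" "t \<notin> Fin f" for x f t
  proof -
    have "x \<notin> Inl ` verts X" using that by (auto simp: Fin_def Xv image_iff)
    then obtain e s where "e \<in> edges X" "0 < s" "s < 1" "x = Pe X e s" using pre_point[of x X] \<open>x \<in> gpoints X\<close> by blast
    then show ?thesis using that by (auto simp: q_def Xe)
  qed
  have cov1: "\<forall>f\<in>edges B. \<forall>t. 0 < t \<and> t < len B f \<and> t \<notin> Fin f \<longrightarrow>
                 (\<exists>e\<in>edges A. \<exists>s. 0 < s \<and> s < 1 \<and> q e s = Inr (f,t))"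
  proof (intro ballI allI impI)
    fix f t assume f: "f \<in> edges B" and t: "0 < t \<and> t < len B f \<and> t \<notin> Fin f"
    then have "Inr (f,t) \<in> gpoints B" by (simp add: gpoints_Inr)
    then obtain x where "x \<in> gpoints X" "m x = Inr (f,t)" using img by force
    then show "\<exists>e\<in>edges A. \<exists>s. 0 < s \<and> s < 1 \<and> q e s = Inr (f,t)" using pre t by blast
  qed
  have cov2: "\<forall>f\<in>D. \<forall>t. 0 < t \<and> t < len B f \<and> t \<notin> Fin f \<longrightarrow>
                 (\<exists>e1 s1 e2 s2. e1 \<in> edges A \<and> e2 \<in> edges A \<and> 0 < s1 \<and> s1 < 1 \<and> 0 < s2 \<and> s2 < 1 \<and>
                    (e1,s1) \<noteq> (e2,s2) \<and> q e1 s1 = Inr (f,t) \<and> q e2 s2 = Inr (f,t))"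
  proof (intro ballI allI impI)
    fix f t assume f: "f \<in> D" and t: "0 < t \<and> t < len B f \<and> t \<notin> Fin f"
    have "Inr (f,t) \<in> edge_points B f" using t by (simp add: edge_points_def)
    then obtain x1 x2 where x: "x1 \<in> gpoints X" "x2 \<in> gpoints X" "x1 \<noteq> x2" "m x1 = Inr (f,t)" "m x2 = Inr (f,t)"
      using f unfolding D_def doubly_covered_def by blast
    obtain e1 s1 where 1: "e1 \<in> edges A" "0 < s1" "s1 < 1" "q e1 s1 = Inr (f,t)" "x1 = Pe X e1 s1"
      using pre[OF x(1) x(4)] t by blast
    obtain e2 s2 where 2: "e2 \<in> edges A" "0 < s2" "s2 < 1" "q e2 s2 = Inr (f,t)" "x2 = Pe X e2 s2"
      using pre[OF x(2) x(5)] t by blast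
    have "(e1,s1) \<noteq> (e2,s2)" using x(3) 1(5) 2(5) by auto
    then show "\<exists>e1 s1 e2 s2. e1 \<in> edges A \<and> e2 \<in> edges A \<and> 0 < s1 \<and> s1 < 1 \<and> 0 < s2 \<and> s2 < 1 \<and>
                    (e1,s1) \<noteq> (e2,s2) \<and> q e1 s1 = Inr (f,t) \<and> q e2 s2 = Inr (f,t)"
      using 1 2 by blast
  qed
  define S where "S = (\<Sum>f\<in>edges B. (if f \<in> D then 2 else 1) * len B f)"
  define Cs where "Cs = (\<Sum>f\<in>edges B. (if f \<in> D then 2 else 1::real))"
  define T where "T = (\<Sum>e\<in>edges A. c e)"
  have Cs0: "Cs \<ge> 0" unfolding Cs_def by (intro sum_nonneg) auto
  have key_eta: "S - 5 * \<eta> * Cs \<le> T" if "\<eta> > 0" for \<eta>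
  proof -
    have "(\<Sum>f\<in>edges B. (if f \<in> D then 2 else 1) * (len B f - 5*\<eta>)) \<le> T"
      unfolding T_def by (rule KEY[OF finA finB cpos qY lip finF cov1 cov2 that])
    moreover have "(\<Sum>f\<in>edges B. (if f \<in> D then 2 else 1) * (len B f - 5*\<eta>)) = S - 5 * \<eta> * Cs"
      unfolding S_def Cs_def by (simp add: algebra_simps sum_subtractf sum_distrib_left)
    ultimately show ?thesis by simp
  qed
  have ST: "S \<le> T"
  proof (rule ccontr)
    assume "\<not> S \<le> T"
    define \<eta> where "\<eta> = (S - T) / (10 * (Cs + 1))"
    have "\<eta> > 0" using \<open>\<not> S \<le> T\<close> Cs0 by (simp add: \<eta>_def)
    have "5 * \<eta> * Cs \<le> 5 * \<eta> * (Cs + 1)" using \<open>\<eta> > 0\<close> by simp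
    also have "\<dots> = (S - T) / 2" using Cs0 by (simp add: \<eta>_def field_simps)
    finally have h1: "5 * \<eta> * Cs \<le> (S - T) / 2" .
    have h2: "S - 5 * \<eta> * Cs \<le> T" by (rule key_eta[OF \<open>\<eta> > 0\<close>])
    from h1 h2 have "S - T \<le> (S - T) / 2" by linarith
    then show False using \<open>\<not> S \<le> T\<close> by (simp add: field_simps)
  qed
  have Dsub: "D \<subseteq> edges B" by (auto simp: D_def doubly_covered_def)
  have "S = perimeter B + (\<Sum>f\<in>edges B. if f \<in> D then len B f else 0)"
    unfolding S_def perimeter_def by (simp add: sum.distrib[symmetric] distrib_right if_distrib) (rule sum.cong, auto)
  also have "(\<Sum>f\<in>edges B. if f \<in> D then len B f else 0) = (\<Sum>f\<in>D. len B f)"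
    using Dsub finB by (simp add: sum.inter_restrict[symmetric] Int_absorb1)
  finally have Seq: "S = perimeter B + (\<Sum>f\<in>D. len B f)" .
  have Teq: "T = \<alpha> * perimeter A" unfolding T_def c_def perimeter_def by (simp add: sum_distrib_left)
  have PA0: "perimeter A \<ge> 0" unfolding perimeter_def using Aok by (intro sum_nonneg) (auto intro: less_imp_le)
  show ?thesis
  proof (cases "perimeter A = 0")
    case True then show ?thesis using al by simp
  next
    case False
    then have "perimeter A > 0" using PA0 by simp
    then show ?thesis using ST Seq Teq by (simp add: D_def X_def pos_divide_le_eq mult.commute)
  qed
qed

end
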